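(* Let $D=\{(x,y)\in\mathbb R^2:x^2+y^2\le1\}$ with the Euclidean metric. There is a sequence of $C^1$ diffeomorphisms $f_n\colon D\to D$ that does not converge to $\mathrm{id}_D$ in the $C^1$ topology but satisfies $\mathrm{d}_W(f_n,\mathrm{id}_D)\to0$ as $n\to\infty$.
   Context: $\mathrm{d}_{C^0}(f,g)=\max_{p}\|f(p)-g(p)\|+\max_p\|f^{-1}(p)-g^{-1}(p)\|$; $\mathrm{d}'_W(f,g)=\sup_{p\ne q}\frac{|\|f(p)-f(q)\|-\|g(p)-g(q)\||}{\|p-q\|}$; $\mathrm{d}_W(f,g)=\mathrm{d}_{C^0}(f,g)+\mathrm{d}'_W(f,g)+\mathrm{d}'_W(f^{-1},g^{-1})$. *)

theory Defs
  imports "HOL-Analysis.Analysis"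
begin

definition disk :: "(real^2) set" where
  "disk = cball 0 1"

definition C1_map :: "'a::real_normed_vector set \<Rightarrow> ('a \<Rightarrow> 'a) \<Rightarrow> ('a \<Rightarrow> 'a \<Rightarrow>\<^sub>L 'a) \<Rightarrow> bool" where
  "C1_map D f f' \<longleftrightarrow>
     (\<forall>p\<in>D. (f has_derivative blinfun_apply (f' p)) (at p within D)) \<and> continuous_on D f'"

definition C1_diffeo :: "'a::real_normed_vector set \<Rightarrow> ('a \<Rightarrow> 'a) \<Rightarrow> bool" where
  "C1_diffeo D f \<longleftrightarrow> bij_betw f D D \<and> (\<exists>f'. C1_map D f f') \<and> (\<exists>g'. C1_map D (inv_into D f) g')"

definition dC0 :: "'a::real_normed_vector set \<Rightarrow> ('a \<Rightarrow> 'a) \<Rightarrow> ('a \<Rightarrow> 'a) \<Rightarrow> real" where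
  "dC0 D f g = (SUP p\<in>D. norm (f p - g p)) + (SUP p\<in>D. norm (inv_into D f p - inv_into D g p))"

definition dW' :: "'a::real_normed_vector set \<Rightarrow> ('a \<Rightarrow> 'a) \<Rightarrow> ('a \<Rightarrow> 'a) \<Rightarrow> real" where
  "dW' D f g = (SUP pq\<in>{(p, q). p \<in> D \<and> q \<in> D \<and> p \<noteq> q}.
      \<bar>norm (f (fst pq) - f (snd pq)) - norm (g (fst pq) - g (snd pq))\<bar> / norm (fst pq - snd pq))"

definition dW :: "'a::real_normed_vector set \<Rightarrow> ('a \<Rightarrow> 'a) \<Rightarrow> ('a \<Rightarrow> 'a) \<Rightarrow> real" where
  "dW D f g = dC0 D f g + dW' D f g + dW' D (inv_into D f) (inv_into D g)"

end

theory Submission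
  imports Defs "HOL-Real_Asymp.Real_Asymp"
begin

definition J :: "real^2 \<Rightarrow> real^2" where
  "J p = vector [-(p$2), p$1]"

lemma J_comp [simp]: "J p $ 1 = - (p$2)" "J p $ 2 = p$1"
  by (simp_all add: J_def)

lemma inner2: "(x::real^2) \<bullet> y = x$1*y$1 + x$2*y$2"
  by (simp add: inner_vec_def sum_2)

lemma linear_J: "linear J"
  by (rule linearI) (auto simp: vec_eq_iff forall_2)

lemma bl_J: "bounded_linear J"
  using linear_J linear_conv_bounded_linear by blast

lemma J_inner_self: "J p \<bullet> p = 0"
  by (simp add: inner2)

lemma J_J [simp]: "J (J p) = - p"
  by (simp add: vec_eq_iff forall_2)

lemma norm_J [simp]: "norm (J p) = norm p"
  by (simp add: norm_eq_sqrt_inner inner2 algebra_simps)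

lemma J_scale [simp]: "J (c *\<^sub>R p) = c *\<^sub>R J p"
  by (simp add: vec_eq_iff forall_2)
lemma J_add [simp]: "J (p + q) = J p + J q"
  by (simp add: vec_eq_iff forall_2)
lemma J_minus [simp]: "J (- p) = - J p"
  by (simp add: vec_eq_iff forall_2)

definition R :: "real \<Rightarrow> real^2 \<Rightarrow> real^2" where
  "R t p = cos t *\<^sub>R p + sin t *\<^sub>R J p"

lemma norm_cs: "norm (a *\<^sub>R p + b *\<^sub>R J p) = sqrt (a^2 + b^2) * norm p"
proof -
  have "(a *\<^sub>R p + b *\<^sub>R J p) \<bullet> (a *\<^sub>R p + b *\<^sub>R J p) = (a^2+b^2) * (p \<bullet> p)"
    by (simp add: inner2 algebra_simps power2_eq_square)
  then show ?thesis
    by (simp add: norm_eq_sqrt_inner real_sqrt_mult)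
qed

lemma norm_R [simp]: "norm (R t p) = norm p"
  by (simp add: R_def norm_cs)

lemma R_inv [simp]: "R (- t) (R t p) = p"
proof -
  have "R (- t) (R t p) = ((cos t)^2 + (sin t)^2) *\<^sub>R p"
    by (simp add: R_def algebra_simps power2_eq_square scaleR_add_left[symmetric] del: scaleR_add_left)
  then show ?thesis by simp
qed

lemma J_R: "J (R t p) = R t (J p)"
  by (simp add: R_def)

lemma norm_R_minus: "norm (R t p - p) \<le> 2 * \<bar>t\<bar> * norm p"
proof -
  have e: "R t p - p = (cos t - 1) *\<^sub>R p + sin t *\<^sub>R J p"
    by (simp add: R_def algebra_simps)
  have c: "\<bar>cos t - 1\<bar> \<le> \<bar>t\<bar>"
  proof -
    have "cos t = 1 - 2 * sin (t/2) ^ 2" using cos_double_sin[of "t/2"] by simp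
    moreover have "sin (t/2)^2 \<le> \<bar>t/2\<bar>"
    proof -
      have "\<bar>sin (t/2)\<bar> \<le> \<bar>t/2\<bar>" by (rule abs_sin_x_le_abs_x)
      moreover have "\<bar>sin (t/2)\<bar> \<le> 1" by simp
      ultimately have "\<bar>sin (t/2)\<bar> * \<bar>sin (t/2)\<bar> \<le> \<bar>t/2\<bar> * 1"
        by (intro mult_mono) auto
      then show ?thesis by (simp add: power2_eq_square abs_mult[symmetric])
    qed
    ultimately show ?thesis by simp
  qed
  have "norm (R t p - p) \<le> \<bar>cos t - 1\<bar> * norm p + \<bar>sin t\<bar> * norm (J p)"
    unfolding e by (rule order_trans[OF norm_triangle_ineq]) simp
  also have "\<dots> \<le> \<bar>t\<bar> * norm p + \<bar>t\<bar> * norm p"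
    unfolding norm_J using c abs_sin_x_le_abs_x[of t]
    by (intro add_mono mult_right_mono) auto
  finally show ?thesis by simp
qed


definition F :: "(real \<Rightarrow> real) \<Rightarrow> real^2 \<Rightarrow> real^2" where
  "F \<phi> p = R (\<phi> (p \<bullet> p)) p"

definition F' :: "(real \<Rightarrow> real) \<Rightarrow> (real \<Rightarrow> real) \<Rightarrow> real^2 \<Rightarrow> real^2 \<Rightarrow> real^2" where
  "F' \<phi> \<phi>' p v = R (\<phi> (p \<bullet> p)) v + (\<phi>' (p \<bullet> p) * (2 * (p \<bullet> v))) *\<^sub>R R (\<phi> (p \<bullet> p)) (J p)"

lemma F_hasderiv:
  assumes "(\<phi> has_real_derivative \<phi>' (p \<bullet> p)) (at (p \<bullet> p))"
  shows "(F \<phi> has_derivative F' \<phi> \<phi>' p) (at p)"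
proof -
  have th: "((\<lambda>p. \<phi> (p \<bullet> p)) has_derivative (\<lambda>v. \<phi>' (p \<bullet> p) * (2 * (p \<bullet> v)))) (at p)"
  proof -
    have i: "((\<lambda>p. p \<bullet> p) has_derivative (\<lambda>v. 2 * (p \<bullet> v))) (at p)"
      by (rule has_derivative_eq_rhs[OF has_derivative_inner[OF has_derivative_ident has_derivative_ident]])
         (simp add: fun_eq_iff inner_commute)
    show ?thesis
      using has_derivative_compose[OF i assms[unfolded has_field_derivative_def]] by simp
  qed
  have jd: "(J has_derivative J) (at p)" using bl_J by (rule bounded_linear_imp_has_derivative)
  show ?thesis
    unfolding F_def R_def
    apply (rule has_derivative_eq_rhs)
     apply (auto intro!: derivative_eq_intros th jd)[1]
    apply (simp add: F'_def R_def fun_eq_iff algebra_simps)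
    done
qed


lemma F'_norm:
  "norm (F' \<phi> \<phi>' p v) \<le> (1 + 2 * \<bar>(p \<bullet> p) * \<phi>' (p \<bullet> p)\<bar>) * norm v"
proof -
  have "norm (F' \<phi> \<phi>' p v) \<le> norm v + \<bar>\<phi>' (p \<bullet> p) * (2 * (p \<bullet> v))\<bar> * norm p"
    unfolding F'_def by (rule order_trans[OF norm_triangle_ineq]) (simp add: J_R[symmetric])
  also have "\<bar>\<phi>' (p \<bullet> p) * (2 * (p \<bullet> v))\<bar> * norm p \<le> 2 * \<bar>(p \<bullet> p) * \<phi>' (p \<bullet> p)\<bar> * norm v"
  proof -
    have cs: "\<bar>p \<bullet> v\<bar> \<le> norm p * norm v" by (rule Cauchy_Schwarz_ineq2)
    have "\<bar>\<phi>' (p \<bullet> p) * (2 * (p \<bullet> v))\<bar> * norm p = 2 * \<bar>\<phi>' (p \<bullet> p)\<bar> * \<bar>p \<bullet> v\<bar> * norm p"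
      by (simp add: abs_mult)
    also have "\<dots> \<le> 2 * \<bar>\<phi>' (p \<bullet> p)\<bar> * (norm p * norm v) * norm p"
      using cs by (intro mult_right_mono mult_left_mono) auto
    also have "\<dots> = 2 * \<bar>(p \<bullet> p) * \<phi>' (p \<bullet> p)\<bar> * norm v"
      by (simp add: abs_mult power2_norm_eq_inner[symmetric] power2_eq_square)
    finally show ?thesis .
  qed
  finally show ?thesis by (simp add: algebra_simps)
qed

lemma F_cont_at:
  assumes D: "\<And>s. s \<ge> 0 \<Longrightarrow> (\<phi> has_real_derivative \<phi>' s) (at s)"
  shows "continuous_on UNIV (\<lambda>p. \<phi> (p \<bullet> p))"
proof -
  have "continuous_on {0..} \<phi>"
    using D by (intro continuous_at_imp_continuous_on) (auto intro: DERIV_isCont)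
  then show ?thesis
    by (rule continuous_on_compose2) (auto intro!: continuous_intros)
qed

lemma F_C1:
  assumes D: "\<And>s. s \<ge> 0 \<Longrightarrow> (\<phi> has_real_derivative \<phi>' s) (at s)"
    and C: "continuous_on {0..} \<phi>'"
  shows "C1_map S (F \<phi>) (\<lambda>p. Blinfun (F' \<phi> \<phi>' p))"
proof -
  have hd: "(F \<phi> has_derivative F' \<phi> \<phi>' p) (at p)" for p
    by (rule F_hasderiv, rule D) simp
  have bl: "bounded_linear (F' \<phi> \<phi>' p)" for p
    using hd by (rule has_derivative_bounded_linear)
  have c1: "continuous_on UNIV (\<lambda>p. \<phi> (p \<bullet> p))" by (rule F_cont_at[OF D])
  have c2: "continuous_on UNIV (\<lambda>p. \<phi>' (p \<bullet> p))"
    using C by (rule continuous_on_compose2) (auto intro!: continuous_intros)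
  have "continuous_on UNIV (\<lambda>p. Blinfun (F' \<phi> \<phi>' p))"
  proof (rule continuous_on_blinfun_componentwise)
    fix i :: "real^2"
    show "continuous_on UNIV (\<lambda>p. blinfun_apply (Blinfun (F' \<phi> \<phi>' p)) i)"
    proof -
      have cc: "continuous_on UNIV (\<lambda>p. cos (\<phi> (p \<bullet> p)))"
        by (rule continuous_on_compose2[OF continuous_on_cos c1]) auto
      have cs: "continuous_on UNIV (\<lambda>p. sin (\<phi> (p \<bullet> p)))"
        by (rule continuous_on_compose2[OF continuous_on_sin c1]) auto
      have cj: "continuous_on UNIV J" by (rule linear_continuous_on[OF bl_J])
      have cj2: "continuous_on UNIV (\<lambda>p. J p)" using cj by simp
      show ?thesis
        unfolding bounded_linear_Blinfun_apply[OF bl] F'_def R_def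
        by (intro continuous_on_add continuous_on_scaleR continuous_on_mult cc cs cj2 c2
            continuous_on_const continuous_on_id continuous_on_inner)
           (simp add: continuous_on_minus continuous_on_id)
    qed
  qed
  then show ?thesis
    unfolding C1_map_def using hd
    by (simp add: bounded_linear_Blinfun_apply[OF bl] has_derivative_at_withinI)
      (meson continuous_on_subset subset_UNIV)
qed


lemma sup_bounds:
  fixes h :: "'a \<Rightarrow> real"
  assumes "A \<noteq> {}" "\<And>x. x \<in> A \<Longrightarrow> 0 \<le> h x \<and> h x \<le> B"
  shows "0 \<le> (SUP x\<in>A. h x) \<and> (SUP x\<in>A. h x) \<le> B"
proof
  obtain x0 where x0: "x0 \<in> A" using assms(1) by blast
  have bdd: "bdd_above (h ` A)" using assms(2) by (intro bdd_aboveI2) blast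
  have "0 \<le> h x0" using assms(2) x0 by blast
  also have "h x0 \<le> (SUP x\<in>A. h x)" by (rule cSUP_upper[OF x0 bdd])
  finally show "0 \<le> (SUP x\<in>A. h x)" .
  show "(SUP x\<in>A. h x) \<le> B" using assms by (intro cSUP_least) auto
qed

lemma F_inner [simp]: "F \<phi> p \<bullet> F \<phi> p = p \<bullet> p"
  by (metis F_def norm_R power2_norm_eq_inner)

lemma norm_F [simp]: "norm (F \<phi> p) = norm p"
  by (simp add: F_def)

lemma F_inv [simp]: "F (\<lambda>s. - \<phi> s) (F \<phi> p) = p"
  by (simp add: F_def[of "\<lambda>s. - \<phi> s"]) (simp add: F_def)

lemma F_disk: "p \<in> disk \<Longrightarrow> F \<phi> p \<in> disk"
  by (simp add: disk_def)

lemma bij_F: "bij_betw (F \<phi>) disk disk"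
proof (rule bij_betw_byWitness[where f' = "F (\<lambda>s. - \<phi> s)"])
  show "\<forall>a\<in>disk. F (\<lambda>s. - \<phi> s) (F \<phi> a) = a" by simp
  have "F \<phi> (F (\<lambda>s. - \<phi> s) a) = a" for a
    using F_inv[of "\<lambda>s. - \<phi> s" a] by simp
  then show "\<forall>a'\<in>disk. F \<phi> (F (\<lambda>s. - \<phi> s) a') = a'" by simp
qed (auto simp: F_disk)

lemma inv_F: "q \<in> disk \<Longrightarrow> inv_into disk (F \<phi>) q = F (\<lambda>s. - \<phi> s) q"
proof -
  assume q: "q \<in> disk"
  have "F \<phi> (F (\<lambda>s. - \<phi> s) q) = q"
    using F_inv[of "\<lambda>s. - \<phi> s" q] by simp
  then show ?thesis
    using bij_F[of \<phi>] q F_disk by (intro inv_into_f_eq) (auto simp: bij_betw_def)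
qed

lemma inv_id: "q \<in> disk \<Longrightarrow> inv_into disk id q = q"
  by (metis id_apply inj_on_id inv_into_f_f)

lemma lip_F:
  assumes D: "\<And>s. s \<ge> 0 \<Longrightarrow> (\<phi> has_real_derivative \<phi>' s) (at s)"
    and B: "\<And>s. 0 \<le> s \<Longrightarrow> s \<le> 1 \<Longrightarrow> 2 * \<bar>s * \<phi>' s\<bar> \<le> e"
    and p: "p \<in> disk" and q: "q \<in> disk"
  shows "norm (F \<phi> p - F \<phi> q) \<le> (1 + e) * norm (p - q)"
proof (rule differentiable_bound[where f' = "F' \<phi> \<phi>'"])
  show "convex disk" by (simp add: disk_def)
  show "(F \<phi> has_derivative F' \<phi> \<phi>' x) (at x within disk)" for x
    by (rule has_derivative_at_withinI, rule F_hasderiv, rule D) simp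
  show "onorm (F' \<phi> \<phi>' x) \<le> 1 + e" if x: "x \<in> disk" for x
  proof (rule onorm_bound)
    have s: "0 \<le> x \<bullet> x" "x \<bullet> x \<le> 1"
      using x by (auto simp: disk_def power2_norm_eq_inner[symmetric] abs_square_le_1)
    have "2 * \<bar>(x \<bullet> x) * \<phi>' (x \<bullet> x)\<bar> \<le> e" using B s by blast
    then show "0 \<le> 1 + e" by linarith
    show "norm (F' \<phi> \<phi>' x v) \<le> (1 + e) * norm v" for v
      by (rule order_trans[OF F'_norm]) (use \<open>2 * \<bar>(x \<bullet> x) * \<phi>' (x \<bullet> x)\<bar> \<le> e\<close> in
          \<open>intro mult_right_mono, auto\<close>)
  qed
qed (use p q in auto)


lemma pair_bound:
  fixes a d e :: real
  assumes "a \<le> (1+e)*d" "d \<le> (1+e)*a" "0<d" "0\<le>e" "0\<le>a"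
  shows "\<bar>a-d\<bar>/d \<le> e"
proof -
  have "\<bar>a-d\<bar> \<le> e*d"
  proof (cases "a \<ge> d")
    case True then show ?thesis using assms by (simp add: algebra_simps)
  next
    case False
    then have "e*a \<le> e*d" using assms by (intro mult_left_mono) auto
    then show ?thesis using assms False by (simp add: algebra_simps)
  qed
  then show ?thesis using assms by (simp add: divide_le_eq)
qed

lemma dW'_cong:
  assumes "\<And>p. p \<in> D \<Longrightarrow> f p = f2 p" "\<And>p. p \<in> D \<Longrightarrow> g p = g2 p"
  shows "dW' D f g = dW' D f2 g2"
  unfolding dW'_def by (rule SUP_cong) (auto simp: assms)

lemma disk_ne: "{(p, q). p \<in> disk \<and> q \<in> disk \<and> p \<noteq> q} \<noteq> {}"
proof -
  have "(0, axis 1 1) \<in> {(p, q). p \<in> disk \<and> q \<in> disk \<and> p \<noteq> q}"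
    by (auto simp: disk_def axis_eq_0_iff)
  then show ?thesis by blast
qed

lemma dW'_F:
  assumes D: "\<And>s. s \<ge> 0 \<Longrightarrow> (\<phi> has_real_derivative \<phi>' s) (at s)"
    and B: "\<And>s. 0 \<le> s \<Longrightarrow> s \<le> 1 \<Longrightarrow> 2 * \<bar>s * \<phi>' s\<bar> \<le> e"
    and e: "0 \<le> e"
  shows "0 \<le> dW' disk (F \<phi>) id \<and> dW' disk (F \<phi>) id \<le> e"
  unfolding dW'_def
proof (rule sup_bounds[OF disk_ne])
  have D2: "\<And>s. s \<ge> 0 \<Longrightarrow> ((\<lambda>s. - \<phi> s) has_real_derivative - \<phi>' s) (at s)"
    using D by (auto intro: derivative_intros)
  have B2: "\<And>s. 0 \<le> s \<Longrightarrow> s \<le> 1 \<Longrightarrow> 2 * \<bar>s * - \<phi>' s\<bar> \<le> e" using B by simp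
  fix pq assume "pq \<in> {(p, q). p \<in> disk \<and> q \<in> disk \<and> p \<noteq> q}"
  then obtain p q where pq: "pq = (p,q)" "p \<in> disk" "q \<in> disk" "p \<noteq> q" by blast
  have 1: "norm (F \<phi> p - F \<phi> q) \<le> (1+e) * norm (p - q)"
    by (rule lip_F[OF D B pq(2,3)])
  have 2: "norm (F (\<lambda>s. - \<phi> s) (F \<phi> p) - F (\<lambda>s. - \<phi> s) (F \<phi> q)) \<le> (1+e) * norm (F \<phi> p - F \<phi> q)"
    by (rule lip_F[OF D2 B2]) (use pq F_disk in auto)
  show "0 \<le> \<bar>norm (F \<phi> (fst pq) - F \<phi> (snd pq)) - norm (id (fst pq) - id (snd pq))\<bar> / norm (fst pq - snd pq) \<and>
        \<bar>norm (F \<phi> (fst pq) - F \<phi> (snd pq)) - norm (id (fst pq) - id (snd pq))\<bar> / norm (fst pq - snd pq) \<le> e"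
    using pair_bound[OF 1 _ _ e] 2 pq by auto
qed

lemma C0_F:
  assumes K: "\<And>p. p \<in> disk \<Longrightarrow> norm (F \<phi> p - p) \<le> k"
  shows "0 \<le> dC0 disk (F \<phi>) id \<and> dC0 disk (F \<phi>) id \<le> 2 * k"
proof -
  have ne: "disk \<noteq> {}" by (auto simp: disk_def intro: exI[of _ 0])
  have a: "0 \<le> (SUP p\<in>disk. norm (F \<phi> p - id p)) \<and> (SUP p\<in>disk. norm (F \<phi> p - id p)) \<le> k"
    by (rule sup_bounds[OF ne]) (use K in auto)
  have b: "0 \<le> (SUP p\<in>disk. norm (inv_into disk (F \<phi>) p - inv_into disk id p)) \<and>
      (SUP p\<in>disk. norm (inv_into disk (F \<phi>) p - inv_into disk id p)) \<le> k"
  proof (rule sup_bounds[OF ne])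
    fix q assume q: "q \<in> disk"
    let ?p = "F (\<lambda>s. - \<phi> s) q"
    have "F \<phi> ?p = q" using F_inv[of "\<lambda>s. - \<phi> s" q] by simp
    moreover have "?p \<in> disk" using q F_disk by blast
    ultimately have "norm (?p - q) \<le> k" using K[of ?p] by (simp add: norm_minus_commute)
    then show "0 \<le> norm (inv_into disk (F \<phi>) q - inv_into disk id q) \<and>
        norm (inv_into disk (F \<phi>) q - inv_into disk id q) \<le> k"
      using q by (simp add: inv_F inv_id)
  qed
  show ?thesis using a b unfolding dC0_def by auto
qed

lemma dW_F:
  assumes D: "\<And>s. s \<ge> 0 \<Longrightarrow> (\<phi> has_real_derivative \<phi>' s) (at s)"
    and B: "\<And>s. 0 \<le> s \<Longrightarrow> s \<le> 1 \<Longrightarrow> 2 * \<bar>s * \<phi>' s\<bar> \<le> e"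
    and e: "0 \<le> e"
    and K: "\<And>p. p \<in> disk \<Longrightarrow> norm (F \<phi> p - p) \<le> k"
  shows "0 \<le> dW disk (F \<phi>) id \<and> dW disk (F \<phi>) id \<le> 2 * k + 2 * e"
proof -
  have D2: "\<And>s. s \<ge> 0 \<Longrightarrow> ((\<lambda>s. - \<phi> s) has_real_derivative - \<phi>' s) (at s)"
    using D by (auto intro: derivative_intros)
  have B2: "\<And>s. 0 \<le> s \<Longrightarrow> s \<le> 1 \<Longrightarrow> 2 * \<bar>s * - \<phi>' s\<bar> \<le> e" using B by simp
  have "dW' disk (inv_into disk (F \<phi>)) (inv_into disk id) = dW' disk (F (\<lambda>s. - \<phi> s)) id"
    by (rule dW'_cong) (auto simp: inv_F inv_id)
  then show ?thesis
    using dW'_F[OF D B e] dW'_F[OF D2 B2 e] C0_F[OF K] unfolding dW_def by auto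
qed

lemma diffeo_F:
  assumes D: "\<And>s. s \<ge> 0 \<Longrightarrow> (\<phi> has_real_derivative \<phi>' s) (at s)"
    and C: "continuous_on {0..} \<phi>'"
  shows "C1_diffeo disk (F \<phi>) \<and> C1_map disk (F \<phi>) (\<lambda>p. Blinfun (F' \<phi> \<phi>' p))"
proof -
  have D2: "\<And>s. s \<ge> 0 \<Longrightarrow> ((\<lambda>s. - \<phi> s) has_real_derivative - \<phi>' s) (at s)"
    using D by (auto intro: derivative_intros)
  have C2: "continuous_on {0..} (\<lambda>s. - \<phi>' s)" using C by (intro continuous_intros)
  have m1: "C1_map disk (F \<phi>) (\<lambda>p. Blinfun (F' \<phi> \<phi>' p))" by (rule F_C1[OF D C])
  have m2: "C1_map disk (F (\<lambda>s. - \<phi> s)) (\<lambda>p. Blinfun (F' (\<lambda>s. - \<phi> s) (\<lambda>s. - \<phi>' s) p))"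
    by (rule F_C1[OF D2 C2])
  have m3: "C1_map disk (inv_into disk (F \<phi>)) (\<lambda>p. Blinfun (F' (\<lambda>s. - \<phi> s) (\<lambda>s. - \<phi>' s) p))"
    using m2 unfolding C1_map_def
    by (auto intro: has_derivative_transform simp: inv_F)
  show ?thesis unfolding C1_diffeo_def using m1 m3 bij_F by blast
qed


definition mm :: "nat \<Rightarrow> real" where "mm n = real n + 1"
definition NN :: "nat \<Rightarrow> real" where "NN n = exp (mm n ^ 2) - 1"
definition ph :: "nat \<Rightarrow> real \<Rightarrow> real" where
  "ph n s = (1 + NN n * s) powr (- (1 / (2 * mm n)))"
definition ph' :: "nat \<Rightarrow> real \<Rightarrow> real" where
  "ph' n s = - (1 / (2 * mm n)) * (1 + NN n * s) powr (- (1 / (2 * mm n)) - 1) * NN n"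

lemma mm_ge: "1 \<le> mm n" by (simp add: mm_def)
lemma NN_pos: "0 < NN n"
proof -
  have "0 < mm n ^ 2" using mm_ge[of n] by simp
  then show ?thesis by (simp add: NN_def)
qed

lemma base_pos: "0 \<le> s \<Longrightarrow> 0 < 1 + NN n * s"
  using NN_pos[of n] by (smt (verit) mult_nonneg_nonneg)

lemma ph_D: "0 \<le> s \<Longrightarrow> (ph n has_real_derivative ph' n s) (at s)"
proof -
  assume s: "0 \<le> s"
  have d: "((\<lambda>s. 1 + NN n * s) has_real_derivative NN n) (at s)"
    by (auto intro!: derivative_eq_intros)
  show ?thesis
    using DERIV_fun_powr[OF d base_pos[OF s], of "- (1 / (2 * mm n))"]
    unfolding ph_def ph'_def by simp
qed

lemma ph_C: "continuous_on {0..} (ph' n)"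
  unfolding ph'_def
  by (intro continuous_intros) (auto dest: base_pos[of _ n])

lemma ph_B: "0 \<le> s \<Longrightarrow> 2 * \<bar>s * ph' n s\<bar> \<le> 1 / mm n"
proof -
  assume s: "0 \<le> s"
  define x where "x = 1 + NN n * s"
  define a where "a = 1 / (2 * mm n)"
  have x: "1 \<le> x" using s NN_pos[of n] by (simp add: x_def)
  have a: "0 < a" using mm_ge[of n] by (simp add: a_def)
  have p1: "x powr (- a) \<le> 1"
    using ge_one_powr_ge_zero[OF x, of a] a by (simp add: powr_minus inverse_le_1_iff)
  have "x powr (- a - 1) = x powr (-a) / x"
    using x by (simp add: powr_diff)
  then have eqa: "\<bar>s * ph' n s\<bar> = a * (x powr (-a) * (NN n * s / x))"
    unfolding ph'_def x_def[symmetric] a_def[symmetric] using s NN_pos[of n] x a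
    by (simp add: abs_mult)
  have q: "NN n * s / x \<le> 1" using x by (simp add: x_def divide_le_eq)
  have "a * (x powr (-a) * (NN n * s / x)) \<le> a * (1 * 1)"
    using p1 q s NN_pos[of n] x a by (intro mult_left_mono mult_mono) auto
  then show ?thesis using eqa by (simp add: a_def)
qed

lemma ph_K: "p \<in> disk \<Longrightarrow> norm (F (ph n) p - p) \<le> 2 * exp (- mm n / 2)"
proof -
  assume p: "p \<in> disk"
  define s where "s = p \<bullet> p"
  have s: "0 \<le> s" "s \<le> 1" using p
    by (auto simp: s_def disk_def power2_norm_eq_inner[symmetric] abs_square_le_1)
  define m where "m = mm n"
  have m: "1 \<le> m" using mm_ge by (simp add: m_def)
  define E where "E = exp (m^2)"
  have E: "1 + NN n = E" by (simp add: NN_def E_def m_def)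
  define x where "x = (1 + NN n * s) / E"
  have Epos: "0 < E" by (simp add: E_def)
  have xpos: "0 < x" using base_pos[OF s(1), of n] Epos by (simp add: x_def)
  have sx: "s \<le> x"
    using s NN_pos[of n] Epos by (simp add: x_def E[symmetric] field_simps mult_left_le)
  have x1: "x \<le> 1" using s NN_pos[of n] Epos
    by (simp add: x_def E[symmetric] field_simps mult_left_le)
  have xx: "x \<le> x powr (1/m)"
    using powr_mono'[of "1/m" 1 x] m xpos x1 by simp
  have eq: "1 + NN n * s = x * E" using Epos by (simp add: x_def)
  have Epow: "E powr (- (1/m)) = exp (- m)"
    using m by (simp add: E_def powr_def power2_eq_square)
  have th2: "(ph n s)^2 = (1 + NN n * s) powr (- (1/m))"
    unfolding ph_def using base_pos[OF s(1), of n]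
    by (simp add: powr_realpow[symmetric] powr_powr m_def)
  have "(ph n s)^2 * s = x powr (- (1/m)) * s * exp (- m)"
    unfolding th2 eq using xpos Epos by (simp add: powr_mult Epow)
  also have "x powr (- (1/m)) * s \<le> 1"
  proof -
    have "s \<le> x powr (1/m)" using sx xx by simp
    then show ?thesis using xpos by (simp add: powr_minus field_simps)
  qed
  then have "x powr (- (1/m)) * s * exp (- m) \<le> 1 * exp (- m)"
    by (intro mult_right_mono) auto
  finally have sq0: "(ph n s)^2 * s \<le> exp (- m)" by simp
  have e1: "(\<bar>ph n s\<bar> * norm p)^2 = (ph n s)^2 * s"
    by (simp add: power_mult_distrib power2_norm_eq_inner s_def)
  have e2: "exp (- m / 2) ^ 2 = exp (- m)"
    by (simp add: power2_eq_square exp_add[symmetric])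
  have sq: "(\<bar>ph n s\<bar> * norm p)^2 \<le> exp (- m / 2) ^ 2"
    using sq0 e1 e2 by simp
  have "\<bar>ph n s\<bar> * norm p \<le> exp (- m / 2)"
    using power2_le_imp_le[OF sq] by simp
  then show ?thesis
    using norm_R_minus[of "ph n s" p] unfolding F_def s_def[symmetric] m_def by simp
qed


lemma lowb: "sin 1 \<le> (SUP p\<in>disk. norm (Blinfun (F' (ph n) (ph' n) p) - id_blinfun))"
proof -
  have bl: "bounded_linear (F' (ph n) (ph' n) p)" for p
    by (rule has_derivative_bounded_linear, rule F_hasderiv, rule ph_D) simp
  have bnd: "norm (Blinfun (F' (ph n) (ph' n) p) - id_blinfun) \<le> 3" if p: "p \<in> disk" for p
  proof -
    have s: "0 \<le> p \<bullet> p" "p \<bullet> p \<le> 1" using p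
      by (auto simp: disk_def power2_norm_eq_inner[symmetric] abs_square_le_1)
    have e: "2 * \<bar>(p \<bullet> p) * ph' n (p \<bullet> p)\<bar> \<le> 1" using ph_B[OF s(1), of n] mm_ge[of n]
      by (smt (verit) divide_le_eq_1)
    have "norm (Blinfun (F' (ph n) (ph' n) p)) \<le> 2"
    proof (rule norm_blinfun_bound)
      fix v show "norm (blinfun_apply (Blinfun (F' (ph n) (ph' n) p)) v) \<le> 2 * norm v"
        unfolding bounded_linear_Blinfun_apply[OF bl]
        by (rule order_trans[OF F'_norm]) (use e in \<open>intro mult_right_mono, auto\<close>)
    qed simp
    moreover have "norm (id_blinfun :: (real^2) \<Rightarrow>\<^sub>L (real^2)) \<le> 1" by (rule norm_blinfun_id_le)
    ultimately show ?thesis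
      using norm_triangle_ineq4[of "Blinfun (F' (ph n) (ph' n) p)" "id_blinfun :: (real^2) \<Rightarrow>\<^sub>L (real^2)"]
      by linarith
  qed
  have bdd: "bdd_above ((\<lambda>p. norm (Blinfun (F' (ph n) (ph' n) p) - id_blinfun)) ` disk)"
    using bnd by (intro bdd_aboveI2) blast
  have z: "(0::real^2) \<in> disk" by (simp add: disk_def)
  define e :: "real^2" where "e = axis 1 1"
  have ne: "norm e = 1" by (simp add: e_def)
  have ph0: "ph n 0 = 1" by (simp add: ph_def)
  have "(Blinfun (F' (ph n) (ph' n) 0) - id_blinfun) e = (cos 1 - 1) *\<^sub>R e + sin 1 *\<^sub>R J e"
    by (simp add: blinfun.diff_left bounded_linear_Blinfun_apply[OF bl] F'_def ph0 R_def algebra_simps)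
  then have "norm ((Blinfun (F' (ph n) (ph' n) 0) - id_blinfun) e) = sqrt ((cos 1 - 1)^2 + (sin 1)^2)"
    by (simp add: norm_cs ne)
  then have "sin 1 \<le> norm ((Blinfun (F' (ph n) (ph' n) 0) - id_blinfun) e)" by simp
  also have "\<dots> \<le> norm (Blinfun (F' (ph n) (ph' n) 0) - id_blinfun)"
    using norm_blinfun[of "Blinfun (F' (ph n) (ph' n) 0) - id_blinfun" e] ne by simp
  also have "\<dots> \<le> (SUP p\<in>disk. norm (Blinfun (F' (ph n) (ph' n) p) - id_blinfun))"
    by (rule cSUP_upper[OF z bdd])
  finally show ?thesis .
qed

theorem mainTheorem16:
  shows "\<exists>(f :: nat \<Rightarrow> real^2 \<Rightarrow> real^2) f'.
     (\<forall>n. C1_diffeo disk (f n) \<and> C1_map disk (f n) (f' n)) \<and>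
     \<not> ((\<lambda>n. SUP p\<in>disk. norm (f n p - p)) \<longlonglongrightarrow> 0 \<and>
        (\<lambda>n. SUP p\<in>disk. norm (f' n p - id_blinfun)) \<longlonglongrightarrow> 0) \<and>
     (\<lambda>n. dW disk (f n) id) \<longlonglongrightarrow> 0"
proof (intro exI conjI)
  let ?f = "\<lambda>n. F (ph n)"
  let ?f' = "\<lambda>n p. Blinfun (F' (ph n) (ph' n) p)"
  show "\<forall>n. C1_diffeo disk (?f n) \<and> C1_map disk (?f n) (?f' n)"
    using diffeo_F[OF ph_D ph_C] by blast
  show "\<not> ((\<lambda>n. SUP p\<in>disk. norm (?f n p - p)) \<longlonglongrightarrow> 0 \<and>
        (\<lambda>n. SUP p\<in>disk. norm (?f' n p - id_blinfun)) \<longlonglongrightarrow> 0)"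
  proof
    assume "(\<lambda>n. SUP p\<in>disk. norm (?f n p - p)) \<longlonglongrightarrow> 0 \<and>
        (\<lambda>n. SUP p\<in>disk. norm (?f' n p - id_blinfun)) \<longlonglongrightarrow> 0"
    then have t: "(\<lambda>n. SUP p\<in>disk. norm (?f' n p - id_blinfun)) \<longlonglongrightarrow> 0" by blast
    have "0 < sin (1::real)" by (rule sin_gt_zero) (use pi_gt3 in auto)
    from order_tendstoD(2)[OF t this] obtain n where
      "(SUP p\<in>disk. norm (?f' n p - id_blinfun)) < sin 1"
      by (auto simp: eventually_sequentially)
    then show False using lowb[of n] by simp
  qed
  have b: "0 \<le> dW disk (?f n) id \<and> dW disk (?f n) id \<le> 2 * (2 * exp (- mm n / 2)) + 2 * (1 / mm n)" for n
    by (rule dW_F[OF ph_D ph_B _ ph_K]) (use mm_ge[of n] in auto)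
  have l: "(\<lambda>n. 2 * (2 * exp (- mm n / 2)) + 2 * (1 / mm n)) \<longlonglongrightarrow> 0"
    unfolding mm_def by real_asymp
  show "(\<lambda>n. dW disk (?f n) id) \<longlonglongrightarrow> 0"
    by (rule tendsto_sandwich[OF _ _ tendsto_const l]) (use b in auto)
qed

end
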